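(* For $m\ge 1$, let $\mathbf{D}_m=(d_{jk})$ be the $m\times m$ symmetric tridiagonal matrix with $d_{kk}=4k^2-6k+\tfrac52$ ($1\le k\le m$), $d_{k,k+1}=d_{k+1,k}=-k(2k-1)$ ($1\le k\le m-1$), and $d_{jk}=0$ if $|j-k|>1$. Then $\mathbf{D}_m$ is positive definite.
   Context: Equivalently, $\mathbf{D}_m=\mathbf{B}_m-\frac12\mathbf{E}_m$, where $\mathbf{E}_m$ is the $m\times m$ identity matrix and $\mathbf{B}_m$ is the symmetric tridiagonal matrix with diagonal entries $4k^2-6k+3$ and off-diagonal entries $-k(2k-1)$. *)

theory Defs
  imports Complex_Main
begin

text \<open>Entries of the m x m matrix D_m, indices 1-based (j,k in {1..m}).\<close>
definition D_entry :: "nat \<Rightarrow> nat \<Rightarrow> real" where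
  "D_entry j k =
     (if j = k then 4 * (real k)^2 - 6 * real k + 5/2
      else if j = k + 1 then - (real k * (2 * real k - 1))
      else if k = j + 1 then - (real j * (2 * real j - 1))
      else 0)"

definition pos_def_mat :: "nat \<Rightarrow> (nat \<Rightarrow> nat \<Rightarrow> real) \<Rightarrow> bool" where
  "pos_def_mat m A \<longleftrightarrow>
     (\<forall>j\<in>{1..m}. \<forall>k\<in>{1..m}. A j k = A k j) \<and>
     (\<forall>x :: nat \<Rightarrow> real. (\<exists>i\<in>{1..m}. x i \<noteq> 0) \<longrightarrow>
        (\<Sum>j=1..m. \<Sum>k=1..m. x j * A j k * x k) > 0)"

end

theory Submission
  imports Defs
begin

definition pp :: "nat \<Rightarrow> real" where "pp k = (2 * real k - 1)^2 / 2"
definition cc :: "nat \<Rightarrow> real" where "cc k = 2 * real k / (2 * real k - 1)"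

definition SS :: "nat \<Rightarrow> (nat \<Rightarrow> real) \<Rightarrow> real" where
  "SS m x = (\<Sum>k=1..<m. pp k * (x k - cc k * x (Suc k))^2) + pp m * (x m)^2"

lemma row_sum:
  assumes "m \<ge> 1"
  shows "(\<Sum>k=1..m. f k * D_entry (Suc m) k) = f m * D_entry (Suc m) m"
proof -
  have "(\<Sum>k=1..m. f k * D_entry (Suc m) k) = (\<Sum>k\<in>{m}. f k * D_entry (Suc m) k)"
    using assms by (intro sum.mono_neutral_right) (auto simp: D_entry_def)
  then show ?thesis by simp
qed

lemma col_sum:
  assumes "m \<ge> 1"
  shows "(\<Sum>j=1..m. D_entry j (Suc m) * f j) = D_entry m (Suc m) * f m"
proof -
  have "(\<Sum>j=1..m. D_entry j (Suc m) * f j) = (\<Sum>j\<in>{m}. D_entry j (Suc m) * f j)"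
    using assms by (intro sum.mono_neutral_right) (auto simp: D_entry_def)
  then show ?thesis by simp
qed

lemma Q_eq:
  assumes "m \<ge> 1"
  shows "(\<Sum>j=1..m. \<Sum>k=1..m. x j * D_entry j k * x k) = SS m x"
  using assms
proof (induction m rule: nat_induct_at_least)
  case base
  then show ?case by (simp add: SS_def D_entry_def pp_def power2_eq_square)
next
  case (Suc m)
  have h1: "2 * real m - 1 \<noteq> 0" using Suc.hyps by simp
  have "(\<Sum>j=1..Suc m. \<Sum>k=1..Suc m. x j * D_entry j k * x k)
      = (\<Sum>j=1..m. \<Sum>k=1..m. x j * D_entry j k * x k)
        + (\<Sum>j=1..m. D_entry j (Suc m) * (x j * x (Suc m)))
        + (\<Sum>k=1..m. (x (Suc m) * x k) * D_entry (Suc m) k)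
        + x (Suc m) * D_entry (Suc m) (Suc m) * x (Suc m)"
    by (simp add: sum.distrib algebra_simps sum_distrib_left)
  also have "\<dots> = SS m x + D_entry m (Suc m) * (x m * x (Suc m))
        + (x (Suc m) * x m) * D_entry (Suc m) m
        + x (Suc m) * D_entry (Suc m) (Suc m) * x (Suc m)"
    using Suc by (simp only: row_sum col_sum)
  also have "\<dots> = SS (Suc m) x"
  proof -
    have sp: "SS (Suc m) x = (\<Sum>k=1..<m. pp k * (x k - cc k * x (Suc k))^2)
       + pp m * (x m - cc m * x (Suc m))^2 + pp (Suc m) * (x (Suc m))^2"
      using Suc.hyps by (simp add: SS_def)
    have e1: "D_entry m (Suc m) = - (real m * (2 * real m - 1))" by (simp add: D_entry_def)
    have e2: "D_entry (Suc m) m = - (real m * (2 * real m - 1))" by (simp add: D_entry_def)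
    have e3: "D_entry (Suc m) (Suc m) = 4 * (real m + 1)^2 - 6 * (real m + 1) + 5/2"
      by (simp add: D_entry_def)
    have e4: "pp m * (x m - cc m * x (Suc m))^2 = pp m * (x m)^2
       - 2 * (real m * (2 * real m - 1)) * x m * x (Suc m) + 2 * (real m)^2 * (x (Suc m))^2"
    proof -
      have a: "pp m * cc m = real m * (2 * real m - 1)"
        using h1 unfolding pp_def cc_def by (simp add: power2_eq_square)
      have b: "pp m * cc m * cc m = 2 * (real m)^2"
        unfolding a using h1 unfolding cc_def by (simp add: power2_eq_square)
      have "pp m * (x m - cc m * x (Suc m))^2 = pp m * (x m)^2
         - 2 * (pp m * cc m) * x m * x (Suc m) + (pp m * cc m * cc m) * (x (Suc m))^2"
        by (simp add: algebra_simps power2_eq_square)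
      then show ?thesis unfolding b unfolding a .
    qed
    have e5: "pp (Suc m) = (2 * real m + 1)^2 / 2" by (simp add: pp_def)
    show ?thesis unfolding sp e4 unfolding e5 e1 e2 e3 SS_def
      by (simp add: algebra_simps power2_eq_square)
  qed
  finally show ?case .
qed

lemma pp_pos: "k \<ge> 1 \<Longrightarrow> pp k > 0"
  by (simp add: pp_def)

theorem proposition4p1:
  fixes m :: nat
  assumes "m \<ge> 1"
  shows "pos_def_mat m D_entry"
  unfolding pos_def_mat_def
proof (intro conjI ballI allI impI)
  fix j k assume "j \<in> {1..m}" "k \<in> {1..m}"
  then show "D_entry j k = D_entry k j" by (auto simp: D_entry_def)
next
  fix x :: "nat \<Rightarrow> real"
  assume ex: "\<exists>i\<in>{1..m}. x i \<noteq> 0"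
  define i where "i = Max {i\<in>{1..m}. x i \<noteq> 0}"
  have fin: "finite {i\<in>{1..m}. x i \<noteq> 0}" by simp
  have ne: "{i\<in>{1..m}. x i \<noteq> 0} \<noteq> {}" using ex by auto
  have iin: "i \<in> {i\<in>{1..m}. x i \<noteq> 0}" unfolding i_def using Max_in[OF fin ne] .
  have imax: "\<And>l. l \<in> {1..m} \<Longrightarrow> x l \<noteq> 0 \<Longrightarrow> l \<le> i"
    unfolding i_def using fin by auto
  have nn: "0 \<le> (\<Sum>k=1..<m. pp k * (x k - cc k * x (Suc k))^2)"
    by (intro sum_nonneg mult_nonneg_nonneg) (auto simp: pp_def)
  have "SS m x > 0"
  proof (cases "i = m")
    case True
    then have "pp m * (x m)^2 > 0" using iin assms pp_pos by auto
    then show ?thesis using nn by (simp add: SS_def)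
  next
    case False
    then have ilt: "i < m" using iin by auto
    have "x (Suc i) = 0" using imax[of "Suc i"] ilt by force
    then have "pp i * (x i - cc i * x (Suc i))^2 > 0" using iin pp_pos by auto
    then have "0 < (\<Sum>k=1..<m. pp k * (x k - cc k * x (Suc k))^2)"
      using ilt iin
      by (intro sum_pos2[where i=i]) (auto simp: pp_def)
    moreover have "0 \<le> pp m * (x m)^2" by (simp add: pp_def)
    ultimately show ?thesis by (simp add: SS_def)
  qed
  then show "(\<Sum>j=1..m. \<Sum>k=1..m. x j * D_entry j k * x k) > 0"
    using Q_eq[OF assms] by simp
qed

end
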